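(* Let $n\ge1$, $G\le S_n$ and $\chi$ a character of $G$. The following are equivalent: (1) $d_\chi^G(A)=d_\chi^G(A^T)$ for every $A\in M_n(\mathbb C)$; (2) $d_\chi^G(AB)=d_\chi^G(BA)$ for all $A,B\in\mathbb S_n(\mathbb C)$; (3) $\chi$ is real valued.
   Context: A character of $G\le S_n$ is a function $g\mapsto\operatorname{tr}(\rho(g))$ for some homomorphism $\rho:G\to GL_m(\mathbb C)$, $m\ge1$. $\mathbb S_n(\mathbb C)$ is the set of complex symmetric $n\times n$ matrices. $d_\chi^G(A)=\sum_{\sigma\in G}\chi(\sigma)\prod_{i=1}^n A_{i\,\sigma(i)}$ for $A\in M_n(\mathbb C)$. *)

theory Defs
  imports "HOL-Combinatorics.Permutations" "Jordan_Normal_Form.Matrix"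
begin

definition perm_subgroup :: "nat \<Rightarrow> (nat \<Rightarrow> nat) set \<Rightarrow> bool" where
  "perm_subgroup n G \<longleftrightarrow> G \<subseteq> {p. p permutes {0..<n}} \<and> id \<in> G \<and>
     (\<forall>p\<in>G. \<forall>q\<in>G. p \<circ> q \<in> G) \<and> (\<forall>p\<in>G. Hilbert_Choice.inv p \<in> G)"

definition mat_trace :: "complex mat \<Rightarrow> complex" where
  "mat_trace A = (\<Sum>i<dim_row A. A $$ (i, i))"

definition is_character :: "(nat \<Rightarrow> nat) set \<Rightarrow> ((nat \<Rightarrow> nat) \<Rightarrow> complex) \<Rightarrow> bool" where
  "is_character G \<chi> \<longleftrightarrow> (\<exists>m::nat. m \<ge> 1 \<and> (\<exists>\<rho> :: (nat \<Rightarrow> nat) \<Rightarrow> complex mat.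
      (\<forall>\<sigma>\<in>G. \<rho> \<sigma> \<in> carrier_mat m m \<and> invertible_mat (\<rho> \<sigma>)) \<and>
      (\<forall>\<sigma>\<in>G. \<forall>\<tau>\<in>G. \<rho> (\<sigma> \<circ> \<tau>) = \<rho> \<sigma> * \<rho> \<tau>) \<and>
      (\<forall>\<sigma>\<in>G. \<chi> \<sigma> = mat_trace (\<rho> \<sigma>))))"

definition gen_matrix_fun :: "nat \<Rightarrow> (nat \<Rightarrow> nat) set \<Rightarrow> ((nat \<Rightarrow> nat) \<Rightarrow> complex) \<Rightarrow> complex mat \<Rightarrow> complex" where
  "gen_matrix_fun n G \<chi> A = (\<Sum>\<sigma>\<in>G. \<chi> \<sigma> * (\<Prod>i<n. A $$ (i, \<sigma> i)))"

end

theory Submission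
  imports Defs "Jordan_Normal_Form.Schur_Decomposition"
begin

lemma my_permutes_funpow:
  assumes "p permutes S" shows "(p ^^ n) permutes S"
  using assms by (induct n) (simp add: permutes_def, metis funpow_Suc_right permutes_compose)

lemma perm_finite_order:
  assumes "s permutes S" "finite S"
  shows "\<exists>K>0. s ^^ K = id"
proof -
  have "\<forall>k. s ^^ k \<in> {p. p permutes S}" using assms(1) by (auto intro: my_permutes_funpow)
  hence sub: "range (\<lambda>k. s ^^ k) \<subseteq> {p. p permutes S}" by auto
  have "finite {p. p permutes S}" using assms(2) by (rule finite_permutations)
  hence "finite (range (\<lambda>k::nat. s ^^ k))" using sub finite_subset by blast
  hence "\<not> inj (\<lambda>k::nat. s ^^ k)" using finite_imageD infinite_UNIV_nat by blast
  then obtain i j :: nat where ij: "i \<noteq> j" "s ^^ i = s ^^ j" unfolding inj_def by blast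
  then obtain a b :: nat where ab: "a < b" "s ^^ a = s ^^ b"
    by (metis linorder_neqE_nat)
  have bij: "bij (s ^^ a)" using assms(1) my_permutes_funpow permutes_bij by blast
  have "s ^^ b = s ^^ (b - a) \<circ> s ^^ a" using ab(1) funpow_add[of "b-a" a s] by simp
  hence "id \<circ> s ^^ a = s ^^ (b - a) \<circ> s ^^ a" using ab(2) by simp
  hence "s ^^ (b - a) = id"
    using bij by (metis bij_is_surj surj_fun_eq)
  thus ?thesis using ab(1) by (intro exI[of _ "b - a"]) auto
qed

lemma fpa: "(f ^^ (m + n)) x = (f ^^ m) ((f ^^ n) x)"
  by (simp add: funpow_add)

lemma funpow_neg_cancel:
  assumes K: "s ^^ K = (id :: 'a \<Rightarrow> 'a)" and K0: "K > 0"
  shows "(s ^^ ((K - 1) * a)) ((s ^^ a) x) = x" "(s ^^ a) ((s ^^ ((K - 1) * a)) x) = x"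
proof -
  have idp: "(id ^^ c) = (id :: 'a \<Rightarrow> 'a)" for c by (induct c) auto
  have "(s ^^ (K * a)) = (s ^^ K) ^^ a" by (simp add: funpow_mult)
  also have "\<dots> = id" by (simp add: K idp)
  finally have idK: "(s ^^ (K * a)) = id" .
  have e1: "(K - 1) * a + a = K * a" by (cases K) (use K0 in \<open>simp_all add: algebra_simps\<close>)
  have e2: "a + (K - 1) * a = K * a" by (cases K) (use K0 in \<open>simp_all add: algebra_simps\<close>)
  have "(s ^^ ((K - 1) * a)) ((s ^^ a) x) = (s ^^ ((K - 1) * a + a)) x" by (rule fpa[symmetric])
  also have "\<dots> = x" unfolding e1 idK by simp
  finally show "(s ^^ ((K - 1) * a)) ((s ^^ a) x) = x" .
  have "(s ^^ a) ((s ^^ ((K - 1) * a)) x) = (s ^^ (a + (K - 1) * a)) x" by (rule fpa[symmetric])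
  also have "\<dots> = x" unfolding e2 idK by simp
  finally show "(s ^^ a) ((s ^^ ((K - 1) * a)) x) = x" .
qed

lemma perm_two_involutions:
  assumes "s permutes S" "finite S"
  shows "\<exists>a b. a permutes S \<and> b permutes S \<and> a \<circ> a = id \<and> b \<circ> b = id \<and> s = a \<circ> b"
proof -
  obtain K where K0: "K > 0" and K: "s ^^ K = id" using perm_finite_order[OF assms] by blast
  define ng where "ng c = (K - 1) * c" for c :: nat
  have c1: "(s ^^ ng c) ((s ^^ c) x) = x" "(s ^^ c) ((s ^^ ng c) x) = x" for c x
    using funpow_neg_cancel[OF K K0] unfolding ng_def by auto
  define C where "C y = {z. \<exists>m. z = (s ^^ m) y}" for y
  have inC: "y \<in> C y" for y unfolding C_def by (auto intro: exI[of _ 0])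
  have Ctrans: "C z = C y" if zC: "z \<in> C y" for z y
  proof -
    obtain a where a: "z = (s ^^ a) y" using zC unfolding C_def by auto
    have "C z \<subseteq> C y"
    proof
      fix x assume "x \<in> C z"
      then obtain k where "x = (s ^^ k) z" unfolding C_def by auto
      hence "x = (s ^^ (k + a)) y" using a by (simp add: fpa)
      thus "x \<in> C y" unfolding C_def by blast
    qed
    moreover have ya: "y = (s ^^ ng a) z" using c1 a by simp
    have "C y \<subseteq> C z"
    proof
      fix x assume "x \<in> C y"
      then obtain k where "x = (s ^^ k) y" unfolding C_def by auto
      hence "x = (s ^^ (k + ng a)) z" using ya by (simp add: fpa)
      thus "x \<in> C z" unfolding C_def by blast
    qed
    ultimately show ?thesis by blast
  qed
  define r where "r y = (SOME z. z \<in> C y)" for y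
  have rC: "r y \<in> C y" for y unfolding r_def using inC by (metis someI)
  have rconst: "r z = r y" if "z \<in> C y" for z y unfolding r_def using Ctrans[OF that] by simp
  define m where "m y = (SOME k. y = (s ^^ k) (r y))" for y
  have ym: "y = (s ^^ m y) (r y)" for y
  proof -
    have "y \<in> C (r y)" using Ctrans[OF rC[of y]] inC by simp
    hence "\<exists>k. y = (s ^^ k) (r y)" unfolding C_def by blast
    thus ?thesis unfolding m_def by (rule someI_ex)
  qed
  have key: "(s ^^ ng a) x = (s ^^ ng b) x" if "(s ^^ a) x = (s ^^ b) x" for a b x
  proof -
    have "(s ^^ ng a) x = (s ^^ ng a) ((s ^^ ng b) ((s ^^ b) x))" using c1 by simp
    also have "\<dots> = (s ^^ ng a) ((s ^^ ng b) ((s ^^ a) x))" using that by simp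
    also have "\<dots> = (s ^^ ng b) ((s ^^ ng a) ((s ^^ a) x))"
      by (metis fpa add.commute)
    also have "\<dots> = (s ^^ ng b) x" using c1 by simp
    finally show ?thesis .
  qed
  define t where "t y = (s ^^ ng (m y)) (r y)" for y
  have sC: "s y \<in> C y" for y unfolding C_def by (auto intro: exI[of _ 1])
  have tC: "t y \<in> C y" for y
  proof -
    have "t y \<in> C (r y)" unfolding t_def C_def by blast
    thus ?thesis using Ctrans[OF rC[of y]] by simp
  qed
  have tt: "t (t y) = y" for y
  proof -
    have r1: "r (t y) = r y" using rconst[OF tC] .
    have "(s ^^ m (t y)) (r y) = (s ^^ ng (m y)) (r y)" using ym[of "t y"] r1 unfolding t_def by simp
    hence "(s ^^ ng (m (t y))) (r y) = (s ^^ ng (ng (m y))) (r y)" by (rule key)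
    hence "t (t y) = (s ^^ ng (ng (m y))) (r y)" using r1 unfolding t_def[of "t y"] by simp
    also have "\<dots> = (s ^^ ng (ng (m y))) ((s ^^ ng (m y)) ((s ^^ m y) (r y)))" using c1 by simp
    also have "\<dots> = (s ^^ ng (ng (m y))) ((s ^^ ng (m y)) y)" using ym[of y] by simp
    also have "\<dots> = y" using c1 by simp
    finally show ?thesis .
  qed
  have sts: "s (t (s y)) = t y" for y
  proof -
    have r1: "r (s y) = r y" using rconst[OF sC] .
    have "(s ^^ m (s y)) (r y) = (s ^^ Suc (m y)) (r y)"
      using ym[of "s y"] ym[of y] r1 by (metis funpow.simps(2) comp_apply)
    hence "(s ^^ ng (m (s y))) (r y) = (s ^^ ng (Suc (m y))) (r y)" by (rule key)
    hence "t (s y) = (s ^^ ng (Suc (m y))) (r y)" using r1 unfolding t_def[of "s y"] by simp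
    hence "s (t (s y)) = (s ^^ Suc (ng (Suc (m y)))) (r y)" by simp
    also have "Suc (ng (Suc (m y))) = K + ng (m y)" unfolding ng_def using K0 by (cases K) auto
    also have "(s ^^ (K + ng (m y))) (r y) = t y" unfolding t_def funpow_add K by simp
    finally show ?thesis .
  qed
  have fixout: "s y = y" if "y \<notin> S" for y using assms(1) that unfolding permutes_def by blast
  have tout: "t y = y" if "y \<notin> S" for y
  proof -
    have sk: "(s ^^ k) y = y" for k by (induct k) (simp_all add: fixout[OF that])
    have "C y = {y}" unfolding C_def using sk by auto
    hence "r y = y" using rC[of y] by simp
    thus ?thesis unfolding t_def using sk by simp
  qed
  have invol_perm: "f permutes S" if "\<And>y. f (f y) = y" "\<And>y. y \<notin> S \<Longrightarrow> f y = y" for f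
  proof -
    have "\<forall>y. \<exists>!x. f x = y"
    proof
      fix y show "\<exists>!x. f x = y"
      proof (rule ex1I[of _ "f y"])
        show "f (f y) = y" by (rule that(1))
        fix x assume "f x = y" thus "x = f y" using that(1)[of x] by simp
      qed
    qed
    thus ?thesis unfolding permutes_def using that(2) by blast
  qed
  define a where "a = s \<circ> t"
  have p1: "t permutes S" by (rule invol_perm) (simp add: tt, simp add: tout)
  have p2: "a permutes S" unfolding a_def by (rule invol_perm) (simp add: sts tt, simp add: tout fixout)
  have p3: "a \<circ> a = id" unfolding a_def by (rule ext) (simp add: sts tt)
  have p4: "t \<circ> t = id" by (rule ext) (simp add: tt)
  have p5: "s = a \<circ> t" unfolding a_def by (rule ext) (simp add: tt)
  show ?thesis by (rule exI[of _ a], rule exI[of _ t]) (intro conjI p1 p2 p3 p4 p5)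
qed

lemma trace_comm:
  fixes A B :: "complex mat"
  assumes "A \<in> carrier_mat a b" "B \<in> carrier_mat b a"
  shows "mat_trace (A * B) = mat_trace (B * A)"
proof -
  have "mat_trace (A * B) = (\<Sum>i<a. \<Sum>k<b. A $$ (i,k) * B $$ (k,i))"
    unfolding mat_trace_def using assms
    by (auto simp: scalar_prod_def atLeast0LessThan intro!: sum.cong)
  also have "\<dots> = (\<Sum>k<b. \<Sum>i<a. B $$ (k,i) * A $$ (i,k))"
    by (subst sum.swap) (simp add: mult.commute)
  also have "\<dots> = mat_trace (B * A)"
    unfolding mat_trace_def using assms
    by (auto simp: scalar_prod_def atLeast0LessThan intro!: sum.cong)
  finally show ?thesis .
qed

lemma ut_mult:
  fixes A B :: "complex mat"
  assumes A: "A \<in> carrier_mat m m" and B: "B \<in> carrier_mat m m"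
    and uA: "upper_triangular A" and uB: "upper_triangular B"
  shows "upper_triangular (A * B) \<and> (\<forall>i<m. (A * B) $$ (i,i) = A $$ (i,i) * B $$ (i,i))"
proof
  have e: "(A * B) $$ (i,j) = (\<Sum>k<m. A $$ (i,k) * B $$ (k,j))" if "i < m" "j < m" for i j
    using A B that by (auto simp: scalar_prod_def atLeast0LessThan intro!: sum.cong)
  show "upper_triangular (A * B)"
  proof (rule upper_triangularI)
    fix i j assume ji: "j < i" and i: "i < dim_row (A * B)"
    hence im: "i < m" using A by simp
    have "(\<Sum>k<m. A $$ (i,k) * B $$ (k,j)) = 0"
    proof (rule sum.neutral, intro ballI)
      fix k assume k: "k \<in> {..<m}"
      show "A $$ (i,k) * B $$ (k,j) = 0"
      proof (cases "k < i")
        case True thus ?thesis using uA im A by auto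
      next
        case False hence jk: "j < k" using ji by simp
        thus ?thesis using upper_triangularD[OF uB jk] k B by simp
      qed
    qed
    thus "(A * B) $$ (i,j) = 0" using e[OF im] ji im by simp
  qed
  show "\<forall>i<m. (A * B) $$ (i,i) = A $$ (i,i) * B $$ (i,i)"
  proof (intro allI impI)
    fix i assume im: "i < m"
    have "(\<Sum>k<m. A $$ (i,k) * B $$ (k,i)) = (\<Sum>k<m. if k = i then A $$ (i,i) * B $$ (i,i) else 0)"
    proof (rule sum.cong[OF refl])
      fix k assume k: "k \<in> {..<m}"
      show "A $$ (i,k) * B $$ (k,i) = (if k = i then A $$ (i,i) * B $$ (i,i) else 0)"
      proof (cases "k < i")
        case True thus ?thesis using uA im A by auto
      next
        case False
        show ?thesis
        proof (cases "k = i")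
          case False
          with \<open>\<not> k < i\<close> have "i < k" by simp
          thus ?thesis using upper_triangularD[OF uB \<open>i < k\<close>] k B False by simp
        qed simp
      qed
    qed
    thus "(A * B) $$ (i,i) = A $$ (i,i) * B $$ (i,i)" using e[OF im im] im by simp
  qed
qed

lemma ut_pow:
  fixes B :: "complex mat"
  assumes B: "B \<in> carrier_mat m m" and uB: "upper_triangular B"
  shows "upper_triangular (B ^\<^sub>m j) \<and> (\<forall>i<m. (B ^\<^sub>m j) $$ (i,i) = B $$ (i,i) ^ j)"
proof (induct j)
  case 0 thus ?case using B by auto
next
  case (Suc j)
  have c: "B ^\<^sub>m j \<in> carrier_mat m m" using B by simp
  from ut_mult[OF c B] Suc uB show ?case by auto
qed

lemma root_unity_trace:
  fixes M :: "complex mat"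
  assumes M: "M \<in> carrier_mat m m" and MK: "M ^\<^sub>m K = 1\<^sub>m m" and K0: "K > 0"
  shows "mat_trace (M ^\<^sub>m (K - 1)) = cnj (mat_trace M)"
proof -
  obtain es where es: "char_poly M = (\<Prod> a \<leftarrow> es. [:- a, 1:])"
    using char_poly_factorized[OF M] by blast
  obtain B P Q where sd: "schur_decomposition M es = (B,P,Q)" by (cases "schur_decomposition M es") auto
  from schur_decomposition[OF M es sd] have sw: "similar_mat_wit M B P Q" and uB: "upper_triangular B"
    by auto
  note D = similar_mat_witD2[OF M sw]
  have Bc: "B \<in> carrier_mat m m" using D by simp
  have trj: "mat_trace (M ^\<^sub>m j) = (\<Sum>i<m. B $$ (i,i) ^ j)" for j
  proof -
    have Bj: "B ^\<^sub>m j \<in> carrier_mat m m" using Bc by simp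
    have "M ^\<^sub>m j = P * B ^\<^sub>m j * Q" by (rule similar_mat_wit_pow_id[OF sw])
    hence "mat_trace (M ^\<^sub>m j) = mat_trace (P * (B ^\<^sub>m j * Q))"
      using D Bj by (simp add: assoc_mult_mat[of _ m m _ m _ m])
    also have "\<dots> = mat_trace ((B ^\<^sub>m j * Q) * P)"
      by (rule trace_comm[of _ m m]) (use D Bj in auto)
    also have "(B ^\<^sub>m j * Q) * P = B ^\<^sub>m j"
      using D Bj by (simp add: assoc_mult_mat[of _ m m _ m _ m])
    also have "mat_trace (B ^\<^sub>m j) = (\<Sum>i<m. B $$ (i,i) ^ j)"
      unfolding mat_trace_def using Bj Bc ut_pow[OF Bc uB, of j] by simp
    finally show ?thesis .
  qed
  have BK: "B ^\<^sub>m K = 1\<^sub>m m"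
  proof -
    have Bj: "B ^\<^sub>m K \<in> carrier_mat m m" using Bc by simp
    have "B ^\<^sub>m K = Q * M ^\<^sub>m K * P"
      by (rule similar_mat_wit_pow_id[OF similar_mat_wit_sym[OF sw]])
    also have "\<dots> = Q * P" using MK D by simp
    also have "\<dots> = 1\<^sub>m m" using D by simp
    finally show ?thesis .
  qed
  have diag: "B $$ (i,i) ^ (K - 1) = cnj (B $$ (i,i))" if i: "i < m" for i
  proof -
    define z where "z = B $$ (i,i)"
    have zK: "z ^ K = 1" using ut_pow[OF Bc uB, of K] BK i unfolding z_def by simp
    hence "norm z ^ K = 1" by (metis norm_one norm_power)
    hence nz: "norm z = 1" using K0 power_eq_imp_eq_base[of "norm z" K 1] by simp
    have "z * z ^ (K - 1) = 1" using zK K0 by (cases K) auto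
    moreover have "z * cnj z = 1" using nz by (simp add: complex_norm_square[symmetric])
    ultimately have "z * z ^ (K - 1) = z * cnj z" by simp
    moreover have "z \<noteq> 0" using nz by auto
    ultimately show ?thesis unfolding z_def by simp
  qed
  have "mat_trace (M ^\<^sub>m (K - 1)) = (\<Sum>i<m. cnj (B $$ (i,i)))" using trj diag by simp
  also have "\<dots> = cnj (mat_trace M)" using trj[of 1] by simp
  finally show ?thesis .
qed

definition PM :: "nat \<Rightarrow> (nat \<Rightarrow> nat) \<Rightarrow> complex mat" where
  "PM n p = mat n n (\<lambda>(i,j). if j = p i then 1 else 0)"

lemma PM_carrier[simp]: "PM n p \<in> carrier_mat n n" unfolding PM_def by simp

lemma PM_dim[simp]: "dim_row (PM n p) = n" "dim_col (PM n p) = n" unfolding PM_def by simp_all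

lemma PM_index[simp]: "i < n \<Longrightarrow> j < n \<Longrightarrow> PM n p $$ (i,j) = (if j = p i then 1 else 0)"
  unfolding PM_def by simp

lemma PM_prod:
  assumes p: "p permutes {0..<n}" and s: "s permutes {0..<n}"
  shows "(\<Prod>i<n. PM n p $$ (i, s i)) = (if s = p then 1 else 0)"
proof (cases "s = p")
  case True
  have "(\<Prod>i<n. PM n p $$ (i, s i)) = (\<Prod>i<n. 1)"
    by (rule prod.cong) (use True p permutes_in_image in auto)
  thus ?thesis using True by simp
next
  case False
  have "\<exists>i<n. s i \<noteq> p i"
  proof (rule ccontr)
    assume "\<not> ?thesis"
    hence "\<forall>i. s i = p i" using p s unfolding permutes_def by (metis atLeastLessThan_iff zero_le)
    thus False using False by auto
  qed
  then obtain i where i: "i < n" "s i \<noteq> p i" by blast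
  have "s i < n" using s i(1) permutes_in_image by fastforce
  hence "PM n p $$ (i, s i) = 0" using i by simp
  hence "(\<Prod>i<n. PM n p $$ (i, s i)) = 0" using i(1) by (intro prod_zero) auto
  thus ?thesis using False by simp
qed

lemma subgroup_facts:
  assumes "perm_subgroup n G"
  shows "\<And>p. p \<in> G \<Longrightarrow> p permutes {0..<n}" "id \<in> G"
    "\<And>p q. p \<in> G \<Longrightarrow> q \<in> G \<Longrightarrow> p \<circ> q \<in> G" "\<And>p. p \<in> G \<Longrightarrow> Hilbert_Choice.inv p \<in> G"
    "finite G"
proof -
  show "\<And>p. p \<in> G \<Longrightarrow> p permutes {0..<n}" "id \<in> G"
    "\<And>p q. p \<in> G \<Longrightarrow> q \<in> G \<Longrightarrow> p \<circ> q \<in> G" "\<And>p. p \<in> G \<Longrightarrow> Hilbert_Choice.inv p \<in> G"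
    using assms unfolding perm_subgroup_def by auto
  have "G \<subseteq> {p. p permutes {0..<n}}" using assms unfolding perm_subgroup_def by auto
  thus "finite G" using finite_permutations[of "{0..<n}"] finite_subset by blast
qed

lemma gen_PM:
  assumes G: "perm_subgroup n G" and p: "p permutes {0..<n}"
  shows "gen_matrix_fun n G \<chi> (PM n p) = (if p \<in> G then \<chi> p else 0)"
proof -
  note sf = subgroup_facts[OF G]
  have "gen_matrix_fun n G \<chi> (PM n p) = (\<Sum>s\<in>G. if s = p then \<chi> s else 0)"
    unfolding gen_matrix_fun_def by (rule sum.cong[OF refl]) (simp add: PM_prod[OF p sf(1)])
  also have "\<dots> = (if p \<in> G then \<chi> p else 0)" using sf(5) by (simp add: sum.delta)
  finally show ?thesis .
qed

lemma PM_transpose: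
  assumes p: "p permutes {0..<n}"
  shows "transpose_mat (PM n p) = PM n (Hilbert_Choice.inv p)"
proof (rule eq_matI)
  fix i j assume i: "i < dim_row (PM n (Hilbert_Choice.inv p))" and j: "j < dim_col (PM n (Hilbert_Choice.inv p))"
  hence i: "i < n" and j: "j < n" by (auto simp: PM_def)
  have "(i = p j) = (j = Hilbert_Choice.inv p i)"
    using permutes_inverses[OF p] by metis
  thus "transpose_mat (PM n p) $$ (i, j) = PM n (Hilbert_Choice.inv p) $$ (i, j)" using i j by (simp add: PM_def)
qed (auto simp: PM_def)

lemma PM_mult:
  assumes a: "a permutes {0..<n}" and b: "b permutes {0..<n}"
  shows "PM n a * PM n b = PM n (b \<circ> a)"
proof (rule eq_matI)
  fix i j assume "i < dim_row (PM n (b \<circ> a))" "j < dim_col (PM n (b \<circ> a))"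
  hence i: "i < n" and j: "j < n" by (auto simp: PM_def)
  have ai: "a i < n" using a i permutes_in_image by fastforce
  have "(PM n a * PM n b) $$ (i,j) = (\<Sum>k\<in>{0..<n}. PM n a $$ (i,k) * PM n b $$ (k,j))"
    using i j by (simp add: scalar_prod_def)
  also have "\<dots> = (\<Sum>k\<in>{0..<n}. if k = a i then (if j = b (a i) then 1 else 0) else 0)"
    by (rule sum.cong) (use i j in auto)
  also have "\<dots> = (if j = b (a i) then 1 else 0)" using ai by (simp add: sum.delta)
  finally show "(PM n a * PM n b) $$ (i,j) = PM n (b \<circ> a) $$ (i,j)" using i j by simp
qed (auto simp: PM_def)

lemma transpose_gen:
  assumes G: "perm_subgroup n G" and A: "A \<in> carrier_mat n n"
  shows "gen_matrix_fun n G \<chi> (transpose_mat A) =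
    (\<Sum>s\<in>G. \<chi> (Hilbert_Choice.inv s) * (\<Prod>i<n. A $$ (i, s i)))"
proof -
  note sf = subgroup_facts[OF G]
  define F where "F p = (\<Prod>i<n. A $$ (i, p i))" for p
  have "gen_matrix_fun n G \<chi> (transpose_mat A) = (\<Sum>s\<in>G. \<chi> s * F (Hilbert_Choice.inv s))"
  proof (unfold gen_matrix_fun_def, rule sum.cong[OF refl])
    fix s assume sG: "s \<in> G"
    have sp: "s permutes {0..<n}" using sf(1)[OF sG] .
    have bb: "bij_betw s {..<n} {..<n}" using permutes_imp_bij[OF sp] by (simp add: atLeast0LessThan)
    have "(\<Prod>i<n. transpose_mat A $$ (i, s i)) = (\<Prod>i<n. A $$ (s i, Hilbert_Choice.inv s (s i)))"
    proof (rule prod.cong[OF refl])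
      fix i assume "i \<in> {..<n}"
      hence i: "i < n" and si: "s i < n" using sp permutes_in_image by fastforce+
      show "transpose_mat A $$ (i, s i) = A $$ (s i, Hilbert_Choice.inv s (s i))"
        using A i si permutes_inverses(2)[OF sp] by simp
    qed
    also have "\<dots> = F (Hilbert_Choice.inv s)" unfolding F_def
      by (rule prod.reindex_bij_betw[OF bb, where g = "\<lambda>j. A $$ (j, Hilbert_Choice.inv s j)"])
    finally show "\<chi> s * (\<Prod>i<n. transpose_mat A $$ (i, s i)) = \<chi> s * F (Hilbert_Choice.inv s)" by simp
  qed
  also have "\<dots> = (\<Sum>s\<in>G. \<chi> (Hilbert_Choice.inv s) * F s)"
  proof -
    have ii: "Hilbert_Choice.inv (Hilbert_Choice.inv s) = s" if "s \<in> G" for s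
      using inv_inv_eq permutes_bij sf(1)[OF that] by blast
    have bij: "bij_betw Hilbert_Choice.inv G G"
    proof (rule bij_betwI[where g = Hilbert_Choice.inv])
      show "Hilbert_Choice.inv \<in> G \<rightarrow> G" using sf(4) by blast
      show "Hilbert_Choice.inv \<in> G \<rightarrow> G" using sf(4) by blast
    qed (use ii in auto)
    show ?thesis
      using sum.reindex_bij_betw[OF bij, where g = "\<lambda>s. \<chi> (Hilbert_Choice.inv s) * F s"] ii
      by (metis (no_types, lifting) sum.cong)
  qed
  finally show ?thesis unfolding F_def .
qed

lemma char_inv:
  assumes G: "perm_subgroup n G" and ch: "is_character G \<chi>" and sG: "s \<in> G"
  shows "\<chi> (Hilbert_Choice.inv s) = cnj (\<chi> s)"
proof -
  note sf = subgroup_facts[OF G]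
  obtain m \<rho> where m: "m \<ge> 1" and rc: "\<And>s. s \<in> G \<Longrightarrow> \<rho> s \<in> carrier_mat m m \<and> invertible_mat (\<rho> s)"
    and hom: "\<And>s t. s \<in> G \<Longrightarrow> t \<in> G \<Longrightarrow> \<rho> (s \<circ> t) = \<rho> s * \<rho> t"
    and tr: "\<And>s. s \<in> G \<Longrightarrow> \<chi> s = mat_trace (\<rho> s)"
    using ch unfolding is_character_def by blast
  have sp: "s permutes {0..<n}" using sf(1)[OF sG] .
  obtain K where K0: "K > 0" and K: "s ^^ K = id" using perm_finite_order[OF sp] by blast
  have powG: "s ^^ j \<in> G" for j
  proof (induct j)
    case 0 show ?case by (subst funpow.simps(1)) (rule sf(2))
  next
    case (Suc j)
    show ?case by (subst funpow_Suc_right) (rule sf(3)[OF Suc sG])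
  qed
  define X where "X = \<rho> id"
  have Xc: "X \<in> carrier_mat m m" using rc[OF sf(2)] X_def by simp
  have XX: "X * X = X" using hom[OF sf(2) sf(2)] X_def by simp
  obtain Y where XY: "X * Y = 1\<^sub>m (dim_row X)" and YX: "Y * X = 1\<^sub>m (dim_row Y)"
    using rc[OF sf(2)] unfolding X_def invertible_mat_def inverts_mat_def by blast
  have Yc: "Y \<in> carrier_mat m m"
  proof -
    have "dim_col Y = m" using arg_cong[OF XY, of dim_col] Xc by simp
    moreover have "dim_row Y = m" using arg_cong[OF YX, of dim_col] Xc by simp
    ultimately show ?thesis by auto
  qed
  have X1: "X = 1\<^sub>m m"
  proof -
    have "X = X * (X * Y)" using XY Xc by simp
    also have "\<dots> = (X * X) * Y" using Xc Yc by (simp add: assoc_mult_mat[of _ m m _ m _ m])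
    also have "\<dots> = 1\<^sub>m m" using XX XY Xc by simp
    finally show ?thesis .
  qed
  define M where "M = \<rho> s"
  have Mc: "M \<in> carrier_mat m m" using rc[OF sG] M_def by simp
  have rpow: "\<rho> (s ^^ j) = M ^\<^sub>m j" for j
  proof (induct j)
    case 0
    have r0: "\<rho> (s ^^ 0) = X" unfolding X_def by (subst funpow.simps(1)) (rule refl)
    have m0: "M ^\<^sub>m 0 = 1\<^sub>m m" using Mc by simp
    show ?case by (simp only: r0 m0 X1)
  next
    case (Suc j)
    have "\<rho> (s ^^ Suc j) = \<rho> (s ^^ j \<circ> s)" by (simp only: funpow_Suc_right)
    also have "\<dots> = \<rho> (s ^^ j) * M" using hom[OF powG sG] M_def by simp
    also have "\<dots> = M ^\<^sub>m Suc j" using Suc by simp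
    finally show ?case .
  qed
  have invs: "Hilbert_Choice.inv s = s ^^ (K - 1)"
  proof (rule inv_unique_comp)
    have e: "s ^^ K = s ^^ Suc (K - 1)" using K0 by simp
    show "s \<circ> s ^^ (K - 1) = id" using e K by (simp only: funpow.simps(2))
    show "s ^^ (K - 1) \<circ> s = id" using e K by (simp only: funpow_Suc_right)
  qed
  have "\<rho> (s ^^ K) = X" unfolding X_def by (simp only: K)
  hence MK: "M ^\<^sub>m K = 1\<^sub>m m" using rpow[of K] X1 by simp
  have "\<chi> (Hilbert_Choice.inv s) = mat_trace (M ^\<^sub>m (K - 1))"
    using tr[OF powG[of "K - 1"]] rpow invs by simp
  also have "\<dots> = cnj (mat_trace M)" by (rule root_unity_trace[OF Mc MK K0])
  also have "\<dots> = cnj (\<chi> s)" using tr[OF sG] M_def by simp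
  finally show ?thesis .
qed

theorem mainTheorem11:
  fixes n :: nat and G :: "(nat \<Rightarrow> nat) set" and \<chi> :: "(nat \<Rightarrow> nat) \<Rightarrow> complex"
  assumes "n \<ge> 1" and "perm_subgroup n G" and "is_character G \<chi>"
  shows "((\<forall>A \<in> carrier_mat n n. gen_matrix_fun n G \<chi> A = gen_matrix_fun n G \<chi> (transpose_mat A))
           \<longleftrightarrow> (\<forall>A \<in> carrier_mat n n. \<forall>B \<in> carrier_mat n n.
                  transpose_mat A = A \<longrightarrow> transpose_mat B = B \<longrightarrow>
                  gen_matrix_fun n G \<chi> (A * B) = gen_matrix_fun n G \<chi> (B * A)))
       \<and> ((\<forall>A \<in> carrier_mat n n. \<forall>B \<in> carrier_mat n n.
                  transpose_mat A = A \<longrightarrow> transpose_mat B = B \<longrightarrow>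
                  gen_matrix_fun n G \<chi> (A * B) = gen_matrix_fun n G \<chi> (B * A))
           \<longleftrightarrow> (\<forall>\<sigma>\<in>G. \<chi> \<sigma> \<in> \<real>))"
proof -
  note G = assms(2)
  note sf = subgroup_facts[OF G]
  let ?d = "gen_matrix_fun n G \<chi>"
  let ?P1 = "\<forall>A \<in> carrier_mat n n. ?d A = ?d (transpose_mat A)"
  let ?P2 = "\<forall>A \<in> carrier_mat n n. \<forall>B \<in> carrier_mat n n.
                  transpose_mat A = A \<longrightarrow> transpose_mat B = B \<longrightarrow> ?d (A * B) = ?d (B * A)"
  let ?Q = "\<forall>s\<in>G. \<chi> (Hilbert_Choice.inv s) = \<chi> s"
  have Q3: "?Q \<longleftrightarrow> (\<forall>\<sigma>\<in>G. \<chi> \<sigma> \<in> \<real>)"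
    using char_inv[OF G assms(3)] by (simp add: Reals_cnj_iff)
  have P1Q: "?P1 \<longleftrightarrow> ?Q"
  proof
    assume P1: ?P1
    show ?Q
    proof
      fix t assume tG: "t \<in> G"
      have tp: "t permutes {0..<n}" using sf(1)[OF tG] .
      have itp: "Hilbert_Choice.inv t permutes {0..<n}" using permutes_inv[OF tp] .
      have "\<chi> t = ?d (PM n t)" unfolding gen_PM[OF G tp] using tG by (rule if_P[symmetric])
      also have "\<dots> = ?d (transpose_mat (PM n t))" using P1 PM_carrier by blast
      also have "\<dots> = \<chi> (Hilbert_Choice.inv t)"
        unfolding PM_transpose[OF tp] gen_PM[OF G itp] using sf(4)[OF tG] by simp
      finally show "\<chi> (Hilbert_Choice.inv t) = \<chi> t" by simp
    qed
  next
    assume Q: ?Q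
    show ?P1
    proof
      fix A :: "complex mat" assume A: "A \<in> carrier_mat n n"
      show "?d A = ?d (transpose_mat A)"
        unfolding transpose_gen[OF G A] unfolding gen_matrix_fun_def
        by (rule sum.cong[OF refl]) (use Q in simp)
    qed
  qed
  have P12: "?P1 \<Longrightarrow> ?P2"
  proof (intro ballI impI)
    fix A B :: "complex mat"
    assume P1: ?P1 and A: "A \<in> carrier_mat n n" and B: "B \<in> carrier_mat n n"
      and sA: "transpose_mat A = A" and sB: "transpose_mat B = B"
    have "transpose_mat (A * B) = B * A" using transpose_mult[OF A B] sA sB by simp
    moreover have "A * B \<in> carrier_mat n n" using A B by simp
    ultimately show "?d (A * B) = ?d (B * A)" using bspec[OF P1, of "A * B"] by simp
  qed
  have P2Q: "?P2 \<Longrightarrow> ?Q"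
  proof
    fix t assume P2: ?P2 and tG: "t \<in> G"
    have tp: "t permutes {0..<n}" using sf(1)[OF tG] .
    obtain a b where ap: "a permutes {0..<n}" and bp: "b permutes {0..<n}" and aa: "a \<circ> a = id"
      and bb: "b \<circ> b = id" and tab: "t = a \<circ> b"
      using perm_two_involutions[OF tp] by blast
    have ia: "Hilbert_Choice.inv a = a" by (rule inv_unique_comp[OF aa aa])
    have ib: "Hilbert_Choice.inv b = b" by (rule inv_unique_comp[OF bb bb])
    have aa': "a (a x) = x" for x using fun_cong[OF aa, of x] by simp
    have bb': "b (b x) = x" for x using fun_cong[OF bb, of x] by simp
    have it: "Hilbert_Choice.inv t = b \<circ> a"
    proof (rule inv_unique_comp)
      show "t \<circ> (b \<circ> a) = id" unfolding tab by (rule ext) (simp add: aa' bb')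
      show "b \<circ> a \<circ> t = id" unfolding tab by (rule ext) (simp add: aa' bb')
    qed
    have sa: "transpose_mat (PM n a) = PM n a" using PM_transpose[OF ap] ia by simp
    have sb: "transpose_mat (PM n b) = PM n b" using PM_transpose[OF bp] ib by simp
    have "?d (PM n b * PM n a) = ?d (PM n a * PM n b)" using P2 sa sb by simp
    hence "?d (PM n t) = ?d (PM n (Hilbert_Choice.inv t))"
    proof -
      have e1: "PM n b * PM n a = PM n t" using PM_mult[OF bp ap] tab by simp
      have e2: "PM n a * PM n b = PM n (Hilbert_Choice.inv t)" using PM_mult[OF ap bp] it by simp
      show ?thesis using e1 e2 \<open>?d (PM n b * PM n a) = ?d (PM n a * PM n b)\<close> by simp
    qed
    moreover have "b \<circ> a permutes {0..<n}" using permutes_compose[OF ap bp] .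
    ultimately show "\<chi> (Hilbert_Choice.inv t) = \<chi> t"
      using gen_PM[OF G tp] gen_PM[OF G permutes_inv[OF tp]] tG sf(4)[OF tG] by simp
  qed
  show ?thesis using P1Q P12 P2Q Q3 by blast
qed

end
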